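(* Consider an exponential bottleneck game on a graph $G$, a Nash-routing $\mathbf{p}=[p_1,\dots,p_N]$ and a routing $\mathbf{p}^*=[p_1^*,\dots,p_N^*]$ of minimum social cost $C^*=C(\mathbf{p}^* )=M$, and suppose $L^*\ge2$. Let $\hat C=\lceil\max_i\log_2\widetilde C_i(\mathbf{p})\rceil$ and $l_1^*=\log_2(L^*-1)$. If $k$ is a positive integer with $\hat C-k>8M+l_1^*+2$, then every non-empty set of players $S\subseteq S^{(1)}\cup S^{(2)}\cup\dots\cup S^{(k)}$ is not self-sufficient in $\mathbf{p}$.
   Context: Player $\pi_i$ has a strategy set $\mathcal{P}_i$ of paths from $u_i$ to $v_i$; a routing is $\mathbf{p}=[p_1,\dots,p_N]$ with $p_i\in\mathcal{P}_i$. $C_e(\mathbf{p})$ is the number of paths in $\mathbf{p}$ using edge $e$; social cost $C(\mathbf{p})=\max_eC_e(\mathbf{p})$; player cost $\widetilde C_i(\mathbf{p})=\sum_{e\in p_i}2^{C_e(\mathbf{p})}$. A Nash-routing is one in which no player can strictly lower its cost by unilaterally switching to another path in its strategy set. $L^*$ is the maximum length of a path in $\mathbf{p}^*$. Stage $i$ ($1\le i\le\hat C$): $S^{(i)}$ is the set of players $\pi_j$ with $2^{\hat C-i}+2\le\widetilde C_j(\mathbf{p})\le 2^{\hat C-i+1}$. Self-sufficiency: for a set $S$ of players and $\pi_j\in S$, let $\mathbf{q}_j$ be the routing consisting only of the players in $S$, where every player of $S$ other than $\pi_j$ uses its path from $\mathbf{p}$ and $\pi_j$ uses $p_j^*$ (congestions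 in $\mathbf{q}_j$ count only these paths). $S$ is self-sufficient in $\mathbf{p}$ if for every $\pi_j\in S$, $\sum_{e\in p_j^*}2^{C_e(\mathbf{q}_j)}\ge\widetilde C_j(\mathbf{p})$. *)

theory Defs
  imports Complex_Main
begin

definition pedges :: "'v list \<Rightarrow> ('v \<times> 'v) set" where
  "pedges xs = set (zip xs (tl xs))"

definition plen :: "'v list \<Rightarrow> nat" where
  "plen xs = length xs - 1"

definition is_path :: "('v \<times> 'v) set \<Rightarrow> 'v \<Rightarrow> 'v \<Rightarrow> 'v list \<Rightarrow> bool" where
  "is_path E u v xs \<longleftrightarrow> xs \<noteq> [] \<and> hd xs = u \<and> last xs = v \<and> distinct xs
     \<and> pedges xs \<subseteq> E"

definition routing_game :: "('v \<times> 'v) set \<Rightarrow> nat \<Rightarrow> (nat \<Rightarrow> 'v) \<Rightarrow> (nat \<Rightarrow> 'v)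
    \<Rightarrow> (nat \<Rightarrow> 'v list set) \<Rightarrow> bool" where
  "routing_game E N s t P \<longleftrightarrow> finite E \<and>
     (\<forall>i<N. P i \<noteq> {} \<and> P i \<subseteq> {xs. is_path E (s i) (t i) xs})"

definition routing :: "nat \<Rightarrow> (nat \<Rightarrow> 'v list set) \<Rightarrow> (nat \<Rightarrow> 'v list) \<Rightarrow> bool" where
  "routing N P p \<longleftrightarrow> (\<forall>i<N. p i \<in> P i)"

definition cong :: "nat \<Rightarrow> (nat \<Rightarrow> 'v list) \<Rightarrow> 'v \<times> 'v \<Rightarrow> nat" where
  "cong N p e = card {i. i < N \<and> e \<in> pedges (p i)}"

definition social_cost :: "('v \<times> 'v) set \<Rightarrow> nat \<Rightarrow> (nat \<Rightarrow> 'v list) \<Rightarrow> nat" where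
  "social_cost E N p = Max (insert 0 (cong N p ` E))"

definition pcost :: "nat \<Rightarrow> (nat \<Rightarrow> 'v list) \<Rightarrow> nat \<Rightarrow> nat" where
  "pcost N p i = (\<Sum>e\<in>pedges (p i). 2 ^ cong N p e)"

definition nash_routing :: "nat \<Rightarrow> (nat \<Rightarrow> 'v list set) \<Rightarrow> (nat \<Rightarrow> 'v list) \<Rightarrow> bool" where
  "nash_routing N P p \<longleftrightarrow> routing N P p \<and>
     (\<forall>i<N. \<forall>q\<in>P i. pcost N p i \<le> pcost N (p(i := q)) i)"

definition optimal_routing :: "('v \<times> 'v) set \<Rightarrow> nat \<Rightarrow> (nat \<Rightarrow> 'v list set)
    \<Rightarrow> (nat \<Rightarrow> 'v list) \<Rightarrow> bool" where
  "optimal_routing E N P ps \<longleftrightarrow> routing N P ps \<and>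
     (\<forall>q. routing N P q \<longrightarrow> social_cost E N ps \<le> social_cost E N q)"

definition Lstar :: "nat \<Rightarrow> (nat \<Rightarrow> 'v list) \<Rightarrow> nat" where
  "Lstar N ps = Max ((\<lambda>i. plen (ps i)) ` {..<N})"

definition Chat :: "nat \<Rightarrow> (nat \<Rightarrow> 'v list) \<Rightarrow> int" where
  "Chat N p = \<lceil>Max ((\<lambda>i. log 2 (real (pcost N p i))) ` {..<N})\<rceil>"

definition stage :: "nat \<Rightarrow> (nat \<Rightarrow> 'v list) \<Rightarrow> nat \<Rightarrow> nat set" where
  "stage N p i = {j. j < N \<and>
      2 powr (real_of_int (Chat N p - int i)) + 2 \<le> real (pcost N p j) \<and>
      real (pcost N p j) \<le> 2 powr (real_of_int (Chat N p - int i + 1))}"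

(* congestion in q_j: players of S other than j use p, player j uses p^*_j *)
definition cong_sub :: "nat set \<Rightarrow> (nat \<Rightarrow> 'v list) \<Rightarrow> (nat \<Rightarrow> 'v list) \<Rightarrow> nat
    \<Rightarrow> 'v \<times> 'v \<Rightarrow> nat" where
  "cong_sub S p ps j e = card {l \<in> S - {j}. e \<in> pedges (p l)}
      + (if e \<in> pedges (ps j) then 1 else 0)"

definition self_sufficient :: "nat \<Rightarrow> (nat \<Rightarrow> 'v list) \<Rightarrow> (nat \<Rightarrow> 'v list) \<Rightarrow> nat set \<Rightarrow> bool" where
  "self_sufficient N p ps S \<longleftrightarrow>
     (\<forall>j\<in>S. (\<Sum>e\<in>pedges (ps j). (2::nat) ^ cong_sub S p ps j e) \<ge> pcost N p j)"

end

theory Submission imports Defs begin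

lemma dc:
  fixes f :: "'e \<Rightarrow> nat"
  assumes "finite S" "\<forall>j\<in>S. finite (A j)"
  shows "(\<Sum>j\<in>S. \<Sum>e\<in>A j. f e) = (\<Sum>e\<in>(\<Union>j\<in>S. A j). card {j\<in>S. e \<in> A j} * f e)"
proof -
  let ?U = "\<Union>j\<in>S. A j"
  have fU: "finite ?U" using assms by auto
  have "(\<Sum>j\<in>S. \<Sum>e\<in>A j. f e) = (\<Sum>j\<in>S. \<Sum>e\<in>?U. if e \<in> A j then f e else 0)"
  proof (rule sum.cong[OF refl])
    fix j assume j: "j \<in> S"
    have "(\<Sum>e\<in>?U. if e \<in> A j then f e else 0) = sum f (?U \<inter> A j)"
      using sum.inter_restrict[OF fU, of f "A j"] by simp
    also have "?U \<inter> A j = A j" using j by auto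
    finally show "(\<Sum>e\<in>A j. f e) = (\<Sum>e\<in>?U. if e \<in> A j then f e else 0)" by simp
  qed
  also have "\<dots> = (\<Sum>e\<in>?U. \<Sum>j\<in>S. if e \<in> A j then f e else 0)" by (rule sum.swap)
  also have "\<dots> = (\<Sum>e\<in>?U. card {j\<in>S. e \<in> A j} * f e)"
  proof (rule sum.cong[OF refl])
    fix e
    have "(\<Sum>j\<in>S. if e \<in> A j then f e else 0) = (\<Sum>j\<in>{j\<in>S. e \<in> A j}. f e)"
      using sum.inter_filter[OF assms(1), of "\<lambda>j. f e" "\<lambda>j. e \<in> A j"] by simp
    thus "(\<Sum>j\<in>S. if e \<in> A j then f e else 0) = card {j\<in>S. e \<in> A j} * f e" by simp
  qed
  finally show ?thesis .
qed

lemma key: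
  fixes cost :: "nat \<Rightarrow> nat" and A B :: "nat \<Rightarrow> 'e set"
  assumes fS: "finite S"
    and fA: "\<forall>j\<in>S. finite (A j)" and fB: "\<forall>j\<in>S. finite (B j)"
    and cB: "\<forall>j\<in>S. card (B j) \<le> L"
    and mB: "\<forall>e. card {j\<in>S. e \<in> B j} \<le> M"
    and lo: "\<forall>j\<in>S. (\<Sum>e\<in>A j. 2 ^ card {l\<in>S. e \<in> A l}) \<le> cost j"
    and hi: "\<forall>j\<in>S. cost j \<le> (\<Sum>e\<in>B j. 2 * 2 ^ card {l\<in>S. e \<in> A l})"
  shows "(\<Sum>j\<in>S. cost j) \<le> 4 * M * (card S * L) * 2 ^ (4 * M)"
proof -
  define c where "c e = card {l\<in>S. e \<in> A l}" for e
  define T where "T = (\<Sum>j\<in>S. cost j)"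
  define DA where "DA = (\<Union>j\<in>S. A j)"
  define EB where "EB = (\<Union>j\<in>S. B j)"
  define U where "U = DA \<union> EB"
  have fDA: "finite DA" using fS fA DA_def by auto
  have fEB: "finite EB" using fS fB EB_def by auto
  have fU: "finite U" using fDA fEB U_def by auto
  have "(\<Sum>j\<in>S. \<Sum>e\<in>A j. 2 ^ c e) \<le> T"
    unfolding T_def using lo c_def by (intro sum_mono) auto
  moreover have "(\<Sum>j\<in>S. \<Sum>e\<in>A j. (2::nat) ^ c e) = (\<Sum>e\<in>DA. c e * 2 ^ c e)"
    unfolding DA_def c_def using dc[OF fS fA] by simp
  moreover have "(\<Sum>e\<in>DA. c e * 2 ^ c e) = (\<Sum>e\<in>U. c e * 2 ^ c e)"
  proof (rule sum.mono_neutral_left[OF fU])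
    show "DA \<subseteq> U" using U_def by auto
    show "\<forall>i\<in>U - DA. c i * 2 ^ c i = 0"
    proof
      fix e assume "e \<in> U - DA"
      hence "{l\<in>S. e \<in> A l} = {}" using DA_def by auto
      hence "c e = 0" unfolding c_def by (metis card.empty)
      thus "c e * 2 ^ c e = 0" by simp
    qed
  qed
  ultimately have L1: "(\<Sum>e\<in>U. c e * 2 ^ c e) \<le> T" by simp
  have "T \<le> (\<Sum>j\<in>S. \<Sum>e\<in>B j. 2 * 2 ^ c e)"
    unfolding T_def using hi c_def by (intro sum_mono) auto
  also have "\<dots> = (\<Sum>e\<in>EB. card {j\<in>S. e \<in> B j} * (2 * 2 ^ c e))"
    unfolding EB_def using dc[OF fS fB] by simp
  also have "\<dots> \<le> (\<Sum>e\<in>EB. M * (2 * 2 ^ c e))"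
    using mB by (intro sum_mono mult_right_mono) auto
  also have "\<dots> = 2 * M * (\<Sum>e\<in>EB. 2 ^ c e)"
    by (simp add: sum_distrib_left algebra_simps)
  finally have L2: "T \<le> 2 * M * (\<Sum>e\<in>EB. 2 ^ c e)" .
  define Y1 where "Y1 = (\<Sum>e\<in>{e\<in>EB. c e < 4*M}. (2::nat) ^ c e)"
  define Y2 where "Y2 = (\<Sum>e\<in>{e\<in>EB. \<not> c e < 4*M}. (2::nat) ^ c e)"
  have Ysplit: "(\<Sum>e\<in>EB. 2 ^ c e) = Y1 + Y2"
  proof -
    have "EB = {e\<in>EB. c e < 4*M} \<union> {e\<in>EB. \<not> c e < 4*M}" by auto
    hence "(\<Sum>e\<in>EB. (2::nat) ^ c e) = (\<Sum>e\<in>{e\<in>EB. c e < 4*M} \<union> {e\<in>EB. \<not> c e < 4*M}. 2 ^ c e)"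
      by simp
    also have "\<dots> = Y1 + Y2" unfolding Y1_def Y2_def
      using fEB by (intro sum.union_disjoint) auto
    finally show ?thesis .
  qed
  have Y1b: "Y1 \<le> card EB * 2 ^ (4*M)"
  proof -
    have "Y1 \<le> (\<Sum>e\<in>{e\<in>EB. c e < 4*M}. (2::nat) ^ (4*M))"
      unfolding Y1_def by (intro sum_mono power_increasing) auto
    also have "\<dots> = card {e\<in>EB. c e < 4*M} * 2 ^ (4*M)" by simp
    also have "\<dots> \<le> card EB * 2 ^ (4*M)"
      using fEB by (intro mult_right_mono card_mono) auto
    finally show ?thesis .
  qed
  have "4 * M * Y2 = (\<Sum>e\<in>{e\<in>EB. \<not> c e < 4*M}. 4 * M * 2 ^ c e)"
    unfolding Y2_def by (simp add: sum_distrib_left)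
  also have "\<dots> \<le> (\<Sum>e\<in>{e\<in>EB. \<not> c e < 4*M}. c e * 2 ^ c e)"
    by (intro sum_mono mult_right_mono) auto
  also have "\<dots> \<le> (\<Sum>e\<in>U. c e * 2 ^ c e)"
    using fU U_def by (intro sum_mono2) auto
  finally have L3: "4 * M * Y2 \<le> T" using L1 by simp
  have "T \<le> 2 * (M * Y1) + 2 * (M * Y2)" using L2 Ysplit by (simp add: algebra_simps)
  moreover have "4 * (M * Y2) \<le> T" using L3 by (simp add: algebra_simps)
  ultimately have "T \<le> 4 * (M * Y1)" by linarith
  also have "\<dots> \<le> 4 * (M * (card EB * 2 ^ (4*M)))"
    using Y1b by (intro mult_left_mono) auto
  also have "card EB \<le> card S * L"
  proof -
    have "card EB \<le> (\<Sum>j\<in>S. card (B j))" unfolding EB_def by (rule card_UN_le[OF fS])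
    also have "\<dots> \<le> (\<Sum>j\<in>S. L)" using cB by (intro sum_mono) auto
    finally show ?thesis by simp
  qed
  hence "4 * (M * (card EB * 2 ^ (4*M))) \<le> 4 * M * (card S * L) * 2 ^ (4 * M)"
    by (simp add: mult_le_mono)
  finally show ?thesis unfolding T_def .
qed

lemma numb: "L \<ge> 2 \<Longrightarrow> 4 * M * L * 2 ^ (4 * M) \<le> 2 ^ (8 * M + 2) * (L - 1::nat)"
proof -
  assume L: "L \<ge> 2"
  have a: "2 * M \<le> 2 ^ (4 * M)"
  proof (cases "M = 0")
    case False
    have "M < 2 ^ M" by (rule less_exp)
    hence "2 * M \<le> 2 ^ (M + 1)" by simp
    also have "\<dots> \<le> 2 ^ (4 * M)" using False by (intro power_increasing) auto
    finally show ?thesis .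
  qed simp
  have "4 * M * L * 2 ^ (4 * M) \<le> 4 * M * (2 * (L - 1)) * 2 ^ (4 * M)"
    using L by (intro mult_right_mono mult_left_mono) auto
  also have "\<dots> = 4 * (L - 1) * (2 * M) * 2 ^ (4 * M)" by simp
  also have "\<dots> \<le> 4 * (L - 1) * 2 ^ (4 * M) * 2 ^ (4 * M)"
    using a by (intro mult_right_mono mult_left_mono) auto
  also have "\<dots> = 2 ^ (8 * M + 2) * (L - 1)"
    by (simp add: power_add[symmetric] algebra_simps)
  finally show ?thesis .
qed


lemma card_pedges: "card (pedges xs) \<le> plen xs"
  unfolding pedges_def plen_def
  using card_length[of "zip xs (tl xs)"] by simp

lemma a1: fixes L m n :: nat assumes L2: "L \<ge> 2" and dge: "real n > real m + log 2 (real L - 1)"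
 shows "2 ^ m * (real L - 1) < 2 ^ n"
proof -
  have "log 2 (2 ^ m * (real L - 1)) = real m + log 2 (real L - 1)"
    using L2 by (simp add: log_mult log_nat_power)
  also have "\<dots> < log 2 (2 ^ n)" using dge by simp
  finally show ?thesis
    using L2 by (subst (asm) log_less_cancel_iff) auto
qed
lemma a2: fixes S :: "nat set" and f :: "nat \<Rightarrow> nat" assumes "\<forall>j\<in>S. a \<le> real (f j)"
  shows "real (card S) * a \<le> real (\<Sum>j\<in>S. f j)"
proof -
  have "real (card S) * a = (\<Sum>j\<in>S. a)" by simp
  also have "\<dots> \<le> (\<Sum>j\<in>S. real (f j))" using assms by (intro sum_mono) auto
  finally show ?thesis by simp
qed

theorem lemma5:
  fixes E :: "('v \<times> 'v) set" and N :: nat and s t :: "nat \<Rightarrow> 'v"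
    and P :: "nat \<Rightarrow> 'v list set" and p ps :: "nat \<Rightarrow> 'v list" and k :: nat
  assumes "routing_game E N s t P"
    and "nash_routing N P p"
    and "optimal_routing E N P ps"
    and "Lstar N ps \<ge> 2"
    and "k \<ge> 1"
    and "real_of_int (Chat N p - int k) >
           8 * real (social_cost E N ps) + log 2 (real (Lstar N ps) - 1) + 2"
  shows "\<forall>S. S \<noteq> {} \<and> S \<subseteq> (\<Union>i\<in>{1..k}. stage N p i) \<longrightarrow> \<not> self_sufficient N p ps S"
proof (intro allI impI notI)
  fix S assume SS: "S \<noteq> {} \<and> S \<subseteq> (\<Union>i\<in>{1..k}. stage N p i)" and ss: "self_sufficient N p ps S"
  define M where "M = social_cost E N ps"
  define L where "L = Lstar N ps"
  define d where "d = Chat N p - int k"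
  have SN: "S \<subseteq> {..<N}" using SS unfolding stage_def by auto
  have fS: "finite S" using SN finite_subset by blast
  have Sne: "S \<noteq> {}" using SS by blast
  have fE: "finite E" using assms(1) unfolding routing_game_def by simp
  have psE: "pedges (ps j) \<subseteq> E" if "j < N" for j
    using assms(1,3) that unfolding routing_game_def optimal_routing_def routing_def is_path_def
    by blast
  have costlo: "2 powr real_of_int d + 2 \<le> real (pcost N p j)" if "j \<in> S" for j
  proof -
    have "j \<in> (\<Union>i\<in>{1..k}. stage N p i)" using SS that by (meson subsetD)
    then obtain i where i: "i \<in> {1..k}" "j \<in> stage N p i" by (rule UN_E)
    have ik: "real_of_int d \<le> real_of_int (Chat N p - int i)"
      unfolding d_def using i(1) by simp
    have "2 powr real_of_int d \<le> 2 powr real_of_int (Chat N p - int i)"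
      by (rule powr_mono[OF ik]) simp
    moreover have "2 powr real_of_int (Chat N p - int i) + 2 \<le> real (pcost N p j)"
      using i(2) unfolding stage_def by blast
    ultimately show ?thesis by linarith
  qed
  let ?c = "\<lambda>e. card {l\<in>S. e \<in> pedges (p l)}"
  have keyr: "(\<Sum>j\<in>S. pcost N p j) \<le> 4 * M * (card S * L) * 2 ^ (4 * M)"
  proof (rule key[OF fS, of "\<lambda>j. pedges (p j)" "\<lambda>j. pedges (ps j)"])
    show "\<forall>j\<in>S. finite (pedges (p j))" by (simp add: pedges_def)
    show "\<forall>j\<in>S. finite (pedges (ps j))" by (simp add: pedges_def)
    show "\<forall>j\<in>S. card (pedges (ps j)) \<le> L"
    proof
      fix j assume "j \<in> S"
      hence j: "j < N" using SN by auto
      have "card (pedges (ps j)) \<le> plen (ps j)" by (rule card_pedges)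
      also have "\<dots> \<le> L" unfolding L_def Lstar_def using j by (intro Max_ge) auto
      finally show "card (pedges (ps j)) \<le> L" .
    qed
    show "\<forall>e. card {j\<in>S. e \<in> pedges (ps j)} \<le> M"
    proof
      fix e
      show "card {j\<in>S. e \<in> pedges (ps j)} \<le> M"
      proof (cases "e \<in> E")
        case True
        have "card {j\<in>S. e \<in> pedges (ps j)} \<le> cong N ps e"
          unfolding cong_def using SN by (intro card_mono) auto
        also have "\<dots> \<le> M" unfolding M_def social_cost_def using True fE by (intro Max_ge) auto
        finally show ?thesis .
      next
        case False
        hence "{j\<in>S. e \<in> pedges (ps j)} = {}" using psE SN by auto
        thus ?thesis by (metis card.empty le0)
      qed
    qed
    show "\<forall>j\<in>S. (\<Sum>e\<in>pedges (p j). 2 ^ ?c e) \<le> pcost N p j"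
    proof
      fix j assume "j \<in> S"
      show "(\<Sum>e\<in>pedges (p j). 2 ^ ?c e) \<le> pcost N p j"
        unfolding pcost_def cong_def using SN
        by (intro sum_mono power_increasing card_mono) auto
    qed
    show "\<forall>j\<in>S. pcost N p j \<le> (\<Sum>e\<in>pedges (ps j). 2 * 2 ^ ?c e)"
    proof
      fix j assume "j \<in> S"
      hence "pcost N p j \<le> (\<Sum>e\<in>pedges (ps j). (2::nat) ^ cong_sub S p ps j e)"
        using ss unfolding self_sufficient_def by auto
      also have "\<dots> \<le> (\<Sum>e\<in>pedges (ps j). 2 ^ (?c e + 1))"
      proof (intro sum_mono power_increasing)
        fix e
        have "card {l \<in> S - {j}. e \<in> pedges (p l)} \<le> ?c e"
          using fS by (intro card_mono) auto
        thus "cong_sub S p ps j e \<le> ?c e + 1" unfolding cong_sub_def by auto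
      qed auto
      finally show "pcost N p j \<le> (\<Sum>e\<in>pedges (ps j). 2 * 2 ^ ?c e)" by simp
    qed
  qed
  have L2: "L \<ge> 2" using assms(4) L_def by simp
  have dge: "real_of_int d > 8 * real M + log 2 (real L - 1) + 2"
    using assms(6) unfolding d_def M_def L_def .
  have "log 2 (real L - 1) \<ge> 0" using L2 by simp
  hence "d \<ge> 0" using dge by linarith
  then obtain n where n: "d = int n" using nonneg_int_cases by blast
  have pn: "2 powr real_of_int d = 2 ^ n" using n by (simp add: powr_realpow)
  have "real n > real (8 * M + 2) + log 2 (real L - 1)" using dge n by simp
  hence A: "2 ^ (8 * M + 2) * (real L - 1) < 2 ^ n" by (rule a1[OF L2])
  have B: "4 * M * L * 2 ^ (4 * M) \<le> 2 ^ (8 * M + 2) * (L - 1)" by (rule numb[OF L2])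
  have "real (L - 1) = real L - 1" using L2 by (simp add: of_nat_diff)
  hence "real (2 ^ (8 * M + 2) * (L - 1)) = 2 ^ (8 * M + 2) * (real L - 1)" by simp
  hence big: "real (4 * M * L * 2 ^ (4 * M)) < 2 ^ n" using A B
    by (metis of_nat_le_iff order_le_less_trans)
  have "\<forall>j\<in>S. 2 ^ n + 2 \<le> real (pcost N p j)" using costlo pn by simp
  hence "real (card S) * (2 ^ n + 2) \<le> real (\<Sum>j\<in>S. pcost N p j)" by (rule a2)
  also have "\<dots> \<le> real (4 * M * (card S * L) * 2 ^ (4 * M))" using keyr by (simp only: of_nat_le_iff)
  also have "\<dots> = real (card S) * real (4 * M * L * 2 ^ (4 * M))" by (simp add: algebra_simps)
  finally have C: "real (card S) * (2 ^ n + 2) \<le> real (card S) * real (4 * M * L * 2 ^ (4 * M))" .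
  have "real (card S) > 0" using fS Sne by (simp add: card_gt_0_iff)
  with C have "2 ^ n + 2 \<le> real (4 * M * L * 2 ^ (4 * M))" by (simp only: mult_le_cancel_left_pos)
  thus False using big by simp
qed

end
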